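(* Assume: (i) for every $t$ the local noises $w^1_t,\ldots,w^n_t$ are i.i.d.; (ii) there are $K_T,K_c>0$ with $|T(s',s,m)-T(s',s,m')|\le K_T\|m-m'\|_\infty$ and $c(m,\hat m,a)\le K_c\|m-\hat m\|_\infty$ for all $s',s\in\mathcal{S}$, $a\in\{0,1\}$, $m,m',\hat m\in\mathcal{P}(\mathcal{S})$; (iii) $\gamma K_p<1$, where $K_p>0$ is a constant with $\|\bar T(p)-\bar T(\hat p)\|_\infty\le K_p\|p-\hat p\|_\infty$ for all $p,\hat p\in\mathcal{P}(\mathcal{S})$. Consider the estimator that never collects data: $\hat m_1=m_1$ and $\hat m_t=\bar T\circ\cdots\circ\bar T(\hat m_1)$ ($t-1$ compositions) for $t\ge2$. Then the total expected discounted cost of this estimator is bounded and converges to zero at rate $1/\sqrt n$: $$\mathbb{E}\Big[\sum_{t=1}^\infty\gamma^{t-1}c(m_t,\hat m_t,0)\Big]\le\frac{\gamma K_c}{(1-\gamma)(1-\gamma K_p)}\,\mathcal{O}\Big(\frac1{\sqrt n}\Big),$$ where the $\mathcal{O}(1/\sqrt n)$ term depends on the variance of the local noises.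
   Context: $n$ nodes with states $s^i_t$ in a finite set $\mathcal{S}\subset\mathbb{R}$, time $t\in\mathbb{N}$. Empirical distribution $m_t(s)=\frac1n\sum_{i=1}^n\mathbb{1}\{s^i_t=s\}$. Dynamics $s^i_{t+1}=f(s^i_t,m_t,w^i_t)$ with local noise $w^i_t$ in a finite set $\mathcal{W}$ with common distribution $P_W$; $f$ is defined for $m\in\mathcal{P}(\mathcal{S})$ (probability vectors on $\mathcal{S}$). $T(s',s,m)=\sum_{w\in\mathcal{W}}P_W(w)\mathbb{1}\{s'=f(s,m,w)\}$. Define $\bar T:\mathcal{P}(\mathcal{S})\to\mathcal{P}(\mathcal{S})$ by $\bar T(p)=\sum_{s\in\mathcal{S}}p(s)T(\cdot,s,p)$. Cost $c:\mathcal{P}(\mathcal{S})^2\times\{0,1\}\to\mathbb{R}_{\ge0}$; discount $\gamma\in(0,1)$. Initial states and noises are mutually independent with finite variances. *)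

theory Defs
  imports "HOL-Probability.Probability"
begin

text \<open>Probability vectors on the finite state set S, represented as functions
  real \<Rightarrow> real vanishing outside S.\<close>
definition probvec :: "real set \<Rightarrow> (real \<Rightarrow> real) \<Rightarrow> bool" where
  "probvec S p \<longleftrightarrow> (\<forall>s\<in>S. 0 \<le> p s) \<and> (\<forall>s. s \<notin> S \<longrightarrow> p s = 0) \<and> sum p S = 1"

definition supnorm :: "real set \<Rightarrow> (real \<Rightarrow> real) \<Rightarrow> real" where
  "supnorm S p = Max ((\<lambda>s. \<bar>p s\<bar>) ` S)"

definition emp :: "nat \<Rightarrow> (nat \<Rightarrow> real) \<Rightarrow> (real \<Rightarrow> real)" where
  "emp n st = (\<lambda>s. real (card {i\<in>{..<n}. st i = s}) / real n)"

definition Tk :: "'w pmf \<Rightarrow> (real \<Rightarrow> (real \<Rightarrow> real) \<Rightarrow> 'w \<Rightarrow> real)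
                  \<Rightarrow> real \<Rightarrow> real \<Rightarrow> (real \<Rightarrow> real) \<Rightarrow> real" where
  "Tk PW f s' s m = (\<Sum>w\<in>set_pmf PW. pmf PW w * (if s' = f s m w then 1 else 0))"

definition Tbar :: "real set \<Rightarrow> 'w pmf \<Rightarrow> (real \<Rightarrow> (real \<Rightarrow> real) \<Rightarrow> 'w \<Rightarrow> real)
                    \<Rightarrow> (real \<Rightarrow> real) \<Rightarrow> (real \<Rightarrow> real)" where
  "Tbar S PW f p = (\<lambda>s'. \<Sum>s\<in>S. p s * Tk PW f s' s p)"

text \<open>Joint state trajectory. Index k corresponds to time t = k+1:
  states ... x 0 is the vector of initial states s^i_1, and the noise w i k
  (i.e. w^i_{k+1}) drives the step from time k+1 to time k+2.\<close>
primrec states :: "(real \<Rightarrow> (real \<Rightarrow> real) \<Rightarrow> 'w \<Rightarrow> real) \<Rightarrow> nat \<Rightarrow> (nat \<Rightarrow> 'a \<Rightarrow> real)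
                   \<Rightarrow> (nat \<Rightarrow> nat \<Rightarrow> 'a \<Rightarrow> 'w) \<Rightarrow> 'a \<Rightarrow> nat \<Rightarrow> (nat \<Rightarrow> real)" where
  "states f n s0 w x 0 = (\<lambda>i. s0 i x)"
| "states f n s0 w x (Suc k) =
     (\<lambda>i. f (states f n s0 w x k i) (emp n (states f n s0 w x k)) (w i k x))"

text \<open>Family of all primitive random variables (initial states and noises),
  packed into a common sum type so that mutual independence can be stated.\<close>
definition prim_rv :: "(nat \<Rightarrow> 'a \<Rightarrow> real) \<Rightarrow> (nat \<Rightarrow> nat \<Rightarrow> 'a \<Rightarrow> 'w)
                       \<Rightarrow> nat + (nat \<times> nat) \<Rightarrow> 'a \<Rightarrow> real + 'w" where
  "prim_rv s0 w j = (case j of Inl i \<Rightarrow> (\<lambda>x. Inl (s0 i x))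
                              | Inr (i, t) \<Rightarrow> (\<lambda>x. Inr (w i t x)))"

end

theory Submission
  imports Defs "HOL-Library.FuncSet"
begin

lemma supnorm_ge: "finite S \<Longrightarrow> s \<in> S \<Longrightarrow> \<bar>h s\<bar> \<le> supnorm S h"
  unfolding supnorm_def by (rule Max_ge) auto

lemma supnorm_le: "finite S \<Longrightarrow> S \<noteq> {} \<Longrightarrow> (\<And>s. s \<in> S \<Longrightarrow> \<bar>h s\<bar> \<le> B) \<Longrightarrow> supnorm S h \<le> B"
  unfolding supnorm_def by (subst Max_le_iff) auto

lemma supnorm_nonneg: "finite S \<Longrightarrow> S \<noteq> {} \<Longrightarrow> 0 \<le> supnorm S h"
proof -
  assume "finite S" "S \<noteq> {}"
  then obtain s where "s \<in> S" by auto
  then show ?thesis using supnorm_ge[OF \<open>finite S\<close> \<open>s\<in>S\<close>, of h] by linarith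
qed

lemma supnorm_tri: "finite S \<Longrightarrow> S \<noteq> {} \<Longrightarrow>
  supnorm S (\<lambda>x. p x - q x) \<le> supnorm S (\<lambda>x. p x - r x) + supnorm S (\<lambda>x. r x - q x)"
proof (rule supnorm_le)
  fix s assume "finite S" "s \<in> S"
  then have "\<bar>p s - r s\<bar> \<le> supnorm S (\<lambda>x. p x - r x)" "\<bar>r s - q s\<bar> \<le> supnorm S (\<lambda>x. r x - q x)"
    using supnorm_ge[of S s] by auto
  then show "\<bar>p s - q s\<bar> \<le> supnorm S (\<lambda>x. p x - r x) + supnorm S (\<lambda>x. r x - q x)" by linarith
qed

lemma supnorm_le_sum: "finite S \<Longrightarrow> S \<noteq> {} \<Longrightarrow> supnorm S h \<le> (\<Sum>s\<in>S. \<bar>h s\<bar>)"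
  by (rule supnorm_le) (auto intro: member_le_sum)

lemma supnorm_zero: "finite S \<Longrightarrow> S \<noteq> {} \<Longrightarrow> supnorm S (\<lambda>x. p x - p x) = 0"
  using supnorm_le[of S "\<lambda>x. p x - p x" 0] supnorm_nonneg[of S "\<lambda>x. p x - p x"] by auto

lemma probvec_le1: "finite S \<Longrightarrow> probvec S p \<Longrightarrow> p s \<le> 1"
proof (cases "s \<in> S")
  case True
  assume S: "finite S" and p: "probvec S p"
  have "p s \<le> sum p S" by (rule member_le_sum) (use True S p in \<open>auto simp: probvec_def\<close>)
  then show ?thesis using p by (simp add: probvec_def)
next
  case False
  assume "probvec S p"
  then show ?thesis using False by (simp add: probvec_def)
qed

lemma supnorm_probvec_le1: "finite S \<Longrightarrow> S \<noteq> {} \<Longrightarrow> probvec S p \<Longrightarrow> probvec S q \<Longrightarrow>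
   supnorm S (\<lambda>x. p x - q x) \<le> 1"
proof (rule supnorm_le)
  fix s assume "finite S" "probvec S p" "probvec S q" "s \<in> S"
  then have "0 \<le> p s" "0 \<le> q s" "p s \<le> 1" "q s \<le> 1"
    using probvec_le1[of S p s] probvec_le1[of S q s] unfolding probvec_def by auto
  then show "\<bar>p s - q s\<bar> \<le> 1" by linarith
qed

lemma emp_cong: "(\<And>i. i < n \<Longrightarrow> a i = b i) \<Longrightarrow> emp n a = emp n b"
  unfolding emp_def by (rule ext) (metis (mono_tags, lifting) lessThan_iff mem_Collect_eq)

lemma card_eq_sum_if: "real (card {i\<in>{..<n::nat}. st i = s}) = (\<Sum>i<n. if s = st i then 1 else 0)"
proof -
  have "real (card {i\<in>{..<n}. st i = s}) = (\<Sum>i\<in>{i\<in>{..<n}. st i = s}. 1)" by simp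
  also have "\<dots> = (\<Sum>i<n. if st i = s then 1 else 0)" by (rule sum.inter_filter) simp
  also have "\<dots> = (\<Sum>i<n. if s = st i then 1 else 0)" by (rule sum.cong) auto
  finally show ?thesis .
qed

lemma emp_sum: "finite S \<Longrightarrow> (\<And>i. i < n \<Longrightarrow> st i \<in> S) \<Longrightarrow>
   (\<Sum>s\<in>S. emp n st s * h s) = (\<Sum>i<n. h (st i)) / real n"
proof -
  assume S: "finite S" and st: "\<And>i. i < n \<Longrightarrow> st i \<in> S"
  have "(\<Sum>s\<in>S. emp n st s * h s) = (\<Sum>s\<in>S. (\<Sum>i\<in>{i\<in>{..<n}. st i = s}. h (st i))) / real n"
    unfolding emp_def by (simp add: sum_divide_distrib)
  also have "(\<Sum>s\<in>S. (\<Sum>i\<in>{i\<in>{..<n}. st i = s}. h (st i))) = (\<Sum>i<n. h (st i))"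
    by (rule sum.group) (use S st in auto)
  finally show ?thesis .
qed

lemma emp_probvec: "finite S \<Longrightarrow> n \<ge> 1 \<Longrightarrow> (\<And>i. i < n \<Longrightarrow> st i \<in> S) \<Longrightarrow> probvec S (emp n st)"
proof -
  assume S: "finite S" and n: "n \<ge> 1" and st: "\<And>i. i < n \<Longrightarrow> st i \<in> S"
  have "sum (emp n st) S = 1"
    using emp_sum[OF S, of n st "\<lambda>_. 1"] st n by simp
  moreover have "s \<notin> S \<Longrightarrow> emp n st s = 0" for s
    unfolding emp_def using st by (auto simp: card_eq_0_iff)
  ultimately show ?thesis unfolding probvec_def emp_def by auto
qed

lemma Tk_nonneg: "0 \<le> Tk PW f s' s m"
  unfolding Tk_def by (auto intro!: sum_nonneg)

lemma Tk_le1: "finite (set_pmf PW) \<Longrightarrow> Tk PW f s' s m \<le> 1"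
proof -
  assume W: "finite (set_pmf PW)"
  have "Tk PW f s' s m \<le> (\<Sum>w\<in>set_pmf PW. pmf PW w)"
    unfolding Tk_def by (rule sum_mono) auto
  also have "\<dots> = 1" by (rule sum_pmf_eq_1) (use W in auto)
  finally show ?thesis .
qed

lemma Tk_out: "(\<And>w. w \<in> set_pmf PW \<Longrightarrow> f s m w \<in> S) \<Longrightarrow> s' \<notin> S \<Longrightarrow> Tk PW f s' s m = 0"
  unfolding Tk_def by (rule sum.neutral) auto

lemma Tk_sum: "finite S \<Longrightarrow> finite (set_pmf PW) \<Longrightarrow> (\<And>w. w \<in> set_pmf PW \<Longrightarrow> f s m w \<in> S) \<Longrightarrow>
   (\<Sum>s'\<in>S. Tk PW f s' s m) = 1"
proof -
  assume S: "finite S" and W: "finite (set_pmf PW)" and fi: "\<And>w. w \<in> set_pmf PW \<Longrightarrow> f s m w \<in> S"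
  have "(\<Sum>s'\<in>S. Tk PW f s' s m) = (\<Sum>w\<in>set_pmf PW. pmf PW w * (\<Sum>s'\<in>S. (if s' = f s m w then 1 else 0)))"
    unfolding Tk_def by (subst sum.swap) (simp add: sum_distrib_left)
  also have "\<dots> = (\<Sum>w\<in>set_pmf PW. pmf PW w)"
    by (rule sum.cong) (use fi S in \<open>auto simp: sum.delta\<close>)
  also have "\<dots> = 1" by (rule sum_pmf_eq_1) (use W in auto)
  finally show ?thesis .
qed

lemma Tbar_probvec:
  assumes S: "finite S" and W: "finite (set_pmf PW)"
    and f_in: "\<And>s m w. s \<in> S \<Longrightarrow> probvec S m \<Longrightarrow> w \<in> set_pmf PW \<Longrightarrow> f s m w \<in> S"
    and p: "probvec S p"
  shows "probvec S (Tbar S PW f p)"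
proof -
  have p0: "\<forall>s\<in>S. 0 \<le> p s" and ps: "sum p S = 1" using p unfolding probvec_def by auto
  have "(\<Sum>s'\<in>S. Tbar S PW f p s') = (\<Sum>s\<in>S. p s * (\<Sum>s'\<in>S. Tk PW f s' s p))"
    unfolding Tbar_def by (subst sum.swap) (simp add: sum_distrib_left)
  also have "\<dots> = (\<Sum>s\<in>S. p s)"
    by (rule sum.cong) (use Tk_sum[OF S W] f_in p in auto)
  finally have 1: "(\<Sum>s'\<in>S. Tbar S PW f p s') = 1" using ps by simp
  have 2: "s' \<notin> S \<Longrightarrow> Tbar S PW f p s' = 0" for s'
    unfolding Tbar_def by (rule sum.neutral) (use Tk_out[of PW f _ p S s'] f_in p in auto)
  have 3: "0 \<le> Tbar S PW f p s'" for s'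
    unfolding Tbar_def using p0 by (auto intro!: sum_nonneg simp: Tk_nonneg)
  show ?thesis using 1 2 3 unfolding probvec_def by auto
qed

lemma Tbar_pow_probvec:
  assumes S: "finite S" and W: "finite (set_pmf PW)"
    and f_in: "\<And>s m w. s \<in> S \<Longrightarrow> probvec S m \<Longrightarrow> w \<in> set_pmf PW \<Longrightarrow> f s m w \<in> S"
    and p: "probvec S p"
  shows "probvec S ((Tbar S PW f ^^ k) p)"
  by (induction k) (use Tbar_probvec[OF S W f_in] p in auto)

lemma Tbar_emp: "finite S \<Longrightarrow> (\<And>i. i < n \<Longrightarrow> st i \<in> S) \<Longrightarrow>
   Tbar S PW f (emp n st) s' = (\<Sum>i<n. Tk PW f s' (st i) (emp n st)) / real n"
  unfolding Tbar_def by (rule emp_sum)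

definition pw :: "'i set \<Rightarrow> ('i \<Rightarrow> 'v \<Rightarrow> real) \<Rightarrow> ('i \<Rightarrow> 'v) \<Rightarrow> real" where
  "pw J p \<xi> = (\<Prod>j\<in>J. p j (\<xi> j))"

lemma sum_PiE_split:
  assumes J: "finite J" and a: "a \<in> J"
  shows "(\<Sum>\<xi>\<in>PiE J A. F \<xi> * pw J p \<xi>) =
    (\<Sum>\<xi>\<in>PiE (J-{a}) A. (\<Sum>v\<in>A a. p a v * F (\<xi>(a:=v))) * pw (J-{a}) p \<xi>)"
proof -
  define K where "K = J - {a}"
  have JK: "J = insert a K" and aK: "a \<notin> K" and K: "finite K" using a J by (auto simp: K_def)
  have pi_upd: "pw J p (g(a:=y)) = p a y * pw K p g" for g y
  proof -
    have "pw J p (g(a:=y)) = p a y * (\<Prod>j\<in>K. p j ((g(a:=y)) j))"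
      unfolding pw_def JK using K aK by (simp add: prod.insert)
    also have "(\<Prod>j\<in>K. p j ((g(a:=y)) j)) = pw K p g"
      unfolding pw_def by (rule prod.cong) (use aK in auto)
    finally show ?thesis .
  qed
  have "(\<Sum>\<xi>\<in>PiE J A. F \<xi> * pw J p \<xi>) =
      (\<Sum>yg\<in>A a \<times> PiE K A. (\<lambda>\<xi>. F \<xi> * pw J p \<xi>) ((\<lambda>(y, g). g(a := y)) yg))"
    unfolding JK PiE_insert_eq by (simp add: sum.reindex[OF inj_combinator[OF aK]])
  also have "\<dots> = (\<Sum>y\<in>A a. \<Sum>g\<in>PiE K A. F (g(a:=y)) * pw J p (g(a:=y)))"
    by (subst sum.cartesian_product) (simp add: case_prod_beta)
  also have "\<dots> = (\<Sum>g\<in>PiE K A. \<Sum>y\<in>A a. F (g(a:=y)) * (p a y * pw K p g))"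
    by (subst sum.swap) (simp add: pi_upd)
  also have "\<dots> = (\<Sum>g\<in>PiE K A. (\<Sum>y\<in>A a. p a y * F (g(a:=y))) * pw K p g)"
    by (rule sum.cong) (auto simp: sum_distrib_left sum_distrib_right mult_ac)
  finally show ?thesis unfolding K_def .
qed

lemma sum_PiE_zero:
  assumes J: "finite J" and a: "a \<in> J" and z: "\<And>\<xi>. (\<Sum>v\<in>A a. p a v * F (\<xi>(a:=v))) = 0"
  shows "(\<Sum>\<xi>\<in>PiE J A. F \<xi> * pw J p \<xi>) = 0"
  unfolding sum_PiE_split[OF J a] z by simp

lemma second_moment:
  fixes g :: "nat \<Rightarrow> ('i \<Rightarrow> 'v) \<Rightarrow> real" and X :: "('i \<Rightarrow> 'v) set"
  assumes fin: "finite X" and w0: "\<And>\<xi>. \<xi> \<in> X \<Longrightarrow> 0 \<le> w \<xi>" and w1: "(\<Sum>\<xi>\<in>X. w \<xi>) = 1"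
    and gb: "\<And>i \<xi>. \<bar>g i \<xi>\<bar> \<le> 1"
    and cross: "\<And>i l. i < n \<Longrightarrow> l < n \<Longrightarrow> i \<noteq> l \<Longrightarrow> (\<Sum>\<xi>\<in>X. (g i \<xi> * g l \<xi>) * w \<xi>) = 0"
  shows "(\<Sum>\<xi>\<in>X. (\<Sum>i<n. g i \<xi>)\<^sup>2 * w \<xi>) \<le> real n"
proof -
  have "(\<Sum>\<xi>\<in>X. (\<Sum>i<n. g i \<xi>)\<^sup>2 * w \<xi>) = (\<Sum>\<xi>\<in>X. \<Sum>i<n. \<Sum>l<n. (g i \<xi> * g l \<xi>) * w \<xi>)"
  proof (rule sum.cong[OF refl])
    fix \<xi>
    have "(\<Sum>i<n. g i \<xi>)\<^sup>2 = (\<Sum>i<n. \<Sum>l<n. g i \<xi> * g l \<xi>)"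
      by (simp only: power2_eq_square sum_product)
    then show "(\<Sum>i<n. g i \<xi>)\<^sup>2 * w \<xi> = (\<Sum>i<n. \<Sum>l<n. (g i \<xi> * g l \<xi>) * w \<xi>)"
      by (simp add: sum_distrib_right)
  qed
  also have "\<dots> = (\<Sum>i<n. \<Sum>l<n. \<Sum>\<xi>\<in>X. (g i \<xi> * g l \<xi>) * w \<xi>)"
    by (subst sum.swap) (subst (2) sum.swap, rule refl)
  also have "\<dots> = (\<Sum>i<n. \<Sum>\<xi>\<in>X. (g i \<xi> * g i \<xi>) * w \<xi>)"
  proof (rule sum.cong[OF refl])
    fix i assume i: "i \<in> {..<n}"
    have "(\<Sum>l<n. \<Sum>\<xi>\<in>X. (g i \<xi> * g l \<xi>) * w \<xi>) =
       (\<Sum>l\<in>{i}. \<Sum>\<xi>\<in>X. (g i \<xi> * g l \<xi>) * w \<xi>)"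
      by (rule sum.mono_neutral_right) (use i cross in auto)
    then show "(\<Sum>l<n. \<Sum>\<xi>\<in>X. (g i \<xi> * g l \<xi>) * w \<xi>) = (\<Sum>\<xi>\<in>X. (g i \<xi> * g i \<xi>) * w \<xi>)"
      by simp
  qed
  also have "\<dots> \<le> (\<Sum>i<n. \<Sum>\<xi>\<in>X. w \<xi>)"
  proof (intro sum_mono)
    fix i \<xi> assume "\<xi> \<in> X"
    have "g i \<xi> * g i \<xi> \<le> 1" using gb[of i \<xi>]
      by (metis abs_mult_self_eq abs_le_square_iff abs_one one_power2 power2_eq_square)
    then show "(g i \<xi> * g i \<xi>) * w \<xi> \<le> w \<xi>" using w0[OF \<open>\<xi> \<in> X\<close>]
      by (simp add: mult_left_le_one_le mult_le_cancel_right1)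
  qed
  also have "\<dots> = real n" using w1 by simp
  finally show ?thesis .
qed

lemma cs_weighted:
  fixes G :: "'x \<Rightarrow> real"
  assumes w0: "\<And>\<xi>. \<xi> \<in> X \<Longrightarrow> 0 \<le> w \<xi>" and w1: "(\<Sum>\<xi>\<in>X. w \<xi>) = 1"
  shows "(\<Sum>\<xi>\<in>X. \<bar>G \<xi>\<bar> * w \<xi>) \<le> sqrt (\<Sum>\<xi>\<in>X. (G \<xi>)\<^sup>2 * w \<xi>)"
proof (rule real_le_rsqrt)
  have "(\<Sum>\<xi>\<in>X. \<bar>G \<xi>\<bar> * w \<xi>) = (\<Sum>\<xi>\<in>X. (\<bar>G \<xi>\<bar> * sqrt (w \<xi>)) * sqrt (w \<xi>))"
    by (rule sum.cong) (use w0 in \<open>auto simp: mult.assoc\<close>)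
  then have "(\<Sum>\<xi>\<in>X. \<bar>G \<xi>\<bar> * w \<xi>)\<^sup>2 \<le>
      (\<Sum>\<xi>\<in>X. (\<bar>G \<xi>\<bar> * sqrt (w \<xi>))\<^sup>2) * (\<Sum>\<xi>\<in>X. (sqrt (w \<xi>))\<^sup>2)"
    using Cauchy_Schwarz_ineq_sum by metis
  also have "(\<Sum>\<xi>\<in>X. (sqrt (w \<xi>))\<^sup>2) = 1" using w0 w1 by simp
  also have "(\<Sum>\<xi>\<in>X. (\<bar>G \<xi>\<bar> * sqrt (w \<xi>))\<^sup>2) = (\<Sum>\<xi>\<in>X. (G \<xi>)\<^sup>2 * w \<xi>)"
    by (rule sum.cong) (use w0 in \<open>auto simp: power_mult_distrib\<close>)
  finally show "(\<Sum>\<xi>\<in>X. \<bar>G \<xi>\<bar> * w \<xi>)\<^sup>2 \<le> (\<Sum>\<xi>\<in>X. (G \<xi>)\<^sup>2 * w \<xi>)" by simp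
qed

lemma (in prob_space) finite_formula:
  fixes X :: "'i \<Rightarrow> 'a \<Rightarrow> 'v" and H :: "('i \<Rightarrow> 'v) \<Rightarrow> real"
  assumes ind: "indep_vars (\<lambda>_. count_space UNIV) X I"
    and J: "finite J" "J \<subseteq> I" "J \<noteq> {}"
    and A: "\<And>j. j \<in> J \<Longrightarrow> finite (A j)"
    and XA: "\<And>j x. j \<in> J \<Longrightarrow> x \<in> space M \<Longrightarrow> X j x \<in> A j"
    and loc: "\<And>\<xi> \<xi>'. (\<And>j. j \<in> J \<Longrightarrow> \<xi> j = \<xi>' j) \<Longrightarrow> H \<xi> = H \<xi>'"
  shows "integrable M (\<lambda>x. H (\<lambda>j. X j x))"
    and "(\<integral>x. H (\<lambda>j. X j x) \<partial>M) = (\<Sum>\<xi>\<in>PiE J A. H \<xi> * pw J (\<lambda>j v. prob {x\<in>space M. X j x = v}) \<xi>)"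
proof -
  define Ev where "Ev \<xi> = {x\<in>space M. \<forall>j\<in>J. X j x = \<xi> j}" for \<xi>
  have rv: "X j \<in> measurable M (count_space UNIV)" if "j \<in> I" for j
    using ind that unfolding indep_vars_def2 by auto
  have single: "{x\<in>space M. X j x = v} \<in> events" if "j \<in> I" for j v
  proof -
    have "X j -` {v} \<inter> space M \<in> events" using rv[OF that] by (rule measurable_sets) simp
    moreover have "X j -` {v} \<inter> space M = {x\<in>space M. X j x = v}" by auto
    ultimately show ?thesis by simp
  qed
  have Ev_eq: "Ev \<xi> = (\<Inter>j\<in>J. X j -` {\<xi> j} \<inter> space M)" for \<xi>
    unfolding Ev_def using J(3) by auto
  have Ev_sets: "Ev \<xi> \<in> events" for \<xi>
    unfolding Ev_eq using J single
    by (intro sets.finite_INT) (auto simp: vimage_def Int_def conj_commute)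
  have Ev_prob: "prob (Ev \<xi>) = pw J (\<lambda>j v. prob {x\<in>space M. X j x = v}) \<xi>" for \<xi>
  proof -
    have "prob (Ev \<xi>) = (\<Prod>j\<in>J. prob (X j -` {\<xi> j} \<inter> space M))"
      unfolding Ev_eq
    proof (rule indep_setsD[where F="\<lambda>i. {X i -` A \<inter> space M | A. A \<in> sets (count_space UNIV)}"])
      show "indep_sets (\<lambda>i. {X i -` A \<inter> space M |A. A \<in> sets (count_space UNIV)}) I"
        using ind unfolding indep_vars_def2 by auto
    qed (use J in auto)
    also have "\<dots> = pw J (\<lambda>j v. prob {x\<in>space M. X j x = v}) \<xi>"
      unfolding pw_def by (rule prod.cong) (auto simp: vimage_def Int_def conj_commute)
    finally show ?thesis .
  qed
  have rep: "H (\<lambda>j. X j x) = (\<Sum>\<xi>\<in>PiE J A. H \<xi> * indicator (Ev \<xi>) x)" if x: "x \<in> space M" for x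
  proof -
    define \<xi>0 where "\<xi>0 = restrict (\<lambda>j. X j x) J"
    have \<xi>0: "\<xi>0 \<in> PiE J A" unfolding \<xi>0_def using XA x by auto
    have ind_eq: "indicator (Ev \<xi>) x = (if \<xi> = \<xi>0 then 1 else 0 :: real)" if "\<xi> \<in> PiE J A" for \<xi>
    proof -
      have "x \<in> Ev \<xi> \<longleftrightarrow> \<xi> = \<xi>0"
      proof
        assume "x \<in> Ev \<xi>"
        then show "\<xi> = \<xi>0" unfolding \<xi>0_def Ev_def
          by (intro extensionalityI[where A=J]) (use that in \<open>auto simp: PiE_def\<close>)
      next
        assume "\<xi> = \<xi>0" then show "x \<in> Ev \<xi>" unfolding \<xi>0_def Ev_def using x by auto
      qed
      then show ?thesis by (simp add: indicator_def)
    qed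
    have "(\<Sum>\<xi>\<in>PiE J A. H \<xi> * indicator (Ev \<xi>) x) = (\<Sum>\<xi>\<in>PiE J A. if \<xi> = \<xi>0 then H \<xi> else 0)"
      by (rule sum.cong) (auto simp: ind_eq)
    also have "\<dots> = H \<xi>0" using \<xi>0 finite_PiE[OF J(1), of A] A by (simp add: sum.delta')
    also have "H \<xi>0 = H (\<lambda>j. X j x)" by (rule loc) (simp add: \<xi>0_def)
    finally show ?thesis by simp
  qed
  have indint: "integrable M (indicator (Ev \<xi>) :: 'a \<Rightarrow> real)" for \<xi>
    by (rule integrable_real_indicator[OF Ev_sets]) (simp add: less_top[symmetric])
  have int: "integrable M (\<lambda>x. \<Sum>\<xi>\<in>PiE J A. H \<xi> * indicator (Ev \<xi>) x)"
    by (intro Bochner_Integration.integrable_sum Bochner_Integration.integrable_mult_right indint)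
  show "integrable M (\<lambda>x. H (\<lambda>j. X j x))"
    using int by (subst Bochner_Integration.integrable_cong[OF refl rep]) auto
  have "(\<integral>x. H (\<lambda>j. X j x) \<partial>M) = (\<integral>x. (\<Sum>\<xi>\<in>PiE J A. H \<xi> * indicator (Ev \<xi>) x) \<partial>M)"
    by (rule Bochner_Integration.integral_cong[OF refl rep])
  also have "\<dots> = (\<Sum>\<xi>\<in>PiE J A. H \<xi> * prob (Ev \<xi>))"
    using Ev_sets sets.sets_into_space[OF Ev_sets]
    by (subst Bochner_Integration.integral_sum) (auto simp: Int_absorb2 indint)
  also have "\<dots> = (\<Sum>\<xi>\<in>PiE J A. H \<xi> * pw J (\<lambda>j v. prob {x\<in>space M. X j x = v}) \<xi>)"
    by (simp add: Ev_prob)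
  finally show "(\<integral>x. H (\<lambda>j. X j x) \<partial>M) = (\<Sum>\<xi>\<in>PiE J A. H \<xi> * pw J (\<lambda>j v. prob {x\<in>space M. X j x = v}) \<xi>)" .
qed

lemma series_bound:
  fixes \<gamma> K B :: real and E :: "nat \<Rightarrow> real"
  assumes g: "0 < \<gamma>" "\<gamma> < 1" and K: "0 < K" "\<gamma> * K < 1" and B: "0 \<le> B"
    and E0: "E 0 = 0" and Eb: "\<And>k. 0 \<le> E k" "\<And>k. E k \<le> 1"
    and Es: "\<And>k. E (Suc k) \<le> B + K * E k"
  shows "summable (\<lambda>k. \<gamma> ^ k * E k)" "(\<Sum>k. \<gamma> ^ k * E k) \<le> \<gamma> * B / ((1 - \<gamma>) * (1 - \<gamma> * K))"
proof -
  have geo: "summable (\<lambda>k. \<gamma> ^ k)" using g by (simp add: summable_geometric)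
  show sm: "summable (\<lambda>k. \<gamma> ^ k * E k)"
    by (rule summable_comparison_test'[OF geo, of 0]) (use g Eb in \<open>auto simp: mult_left_le\<close>)
  define \<Phi> where "\<Phi> = (\<Sum>k. \<gamma> ^ k * E k)"
  have sm1: "summable (\<lambda>k. \<gamma> ^ Suc k * E (Suc k))"
    using sm by (subst summable_Suc_iff) 
  have "(\<Sum>k. \<gamma> ^ Suc k * E (Suc k)) = \<Phi> - \<gamma> ^ 0 * E 0"
    unfolding \<Phi>_def by (rule suminf_split_head[OF sm])
  then have e1: "\<Phi> = (\<Sum>k. \<gamma> ^ Suc k * E (Suc k))" using E0 by simp
  have sm2: "summable (\<lambda>k. \<gamma> * B * \<gamma> ^ k)" using geo by (rule summable_mult)
  have sm3: "summable (\<lambda>k. \<gamma> * K * (\<gamma> ^ k * E k))" using sm by (rule summable_mult)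
  have "(\<Sum>k. \<gamma> ^ Suc k * E (Suc k)) \<le> (\<Sum>k. \<gamma> * B * \<gamma> ^ k + \<gamma> * K * (\<gamma> ^ k * E k))"
  proof (rule suminf_le[OF _ sm1 summable_add[OF sm2 sm3]])
    fix k
    have "\<gamma> ^ Suc k * E (Suc k) \<le> \<gamma> ^ Suc k * (B + K * E k)"
      using Es[of k] g by (intro mult_left_mono) auto
    then show "\<gamma> ^ Suc k * E (Suc k) \<le> \<gamma> * B * \<gamma> ^ k + \<gamma> * K * (\<gamma> ^ k * E k)"
      by (simp add: algebra_simps)
  qed
  also have "\<dots> = (\<Sum>k. \<gamma> * B * \<gamma> ^ k) + (\<Sum>k. \<gamma> * K * (\<gamma> ^ k * E k))"
    by (rule suminf_add[OF sm2 sm3, symmetric])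
  also have "(\<Sum>k. \<gamma> * B * \<gamma> ^ k) = \<gamma> * B * (1 / (1 - \<gamma>))"
    using g by (subst suminf_mult[OF geo]) (simp add: suminf_geometric)
  also have "(\<Sum>k. \<gamma> * K * (\<gamma> ^ k * E k)) = \<gamma> * K * \<Phi>"
    unfolding \<Phi>_def using suminf_mult[OF sm, of "\<gamma> * K"] by simp
  finally have "\<Phi> \<le> \<gamma> * B / (1 - \<gamma>) + \<gamma> * K * \<Phi>" using e1 by simp
  then have "\<Phi> * (1 - \<gamma> * K) \<le> \<gamma> * B / (1 - \<gamma>)" by (simp add: algebra_simps)
  moreover have "0 < 1 - \<gamma> * K" using K by simp
  ultimately have "\<Phi> \<le> \<gamma> * B / (1 - \<gamma>) / (1 - \<gamma> * K)" by (metis pos_le_divide_eq)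
  then show "(\<Sum>k. \<gamma> ^ k * E k) \<le> \<gamma> * B / ((1 - \<gamma>) * (1 - \<gamma> * K))"
    unfolding \<Phi>_def by (simp add: divide_divide_eq_left)
qed

definition JJ :: "nat \<Rightarrow> nat \<Rightarrow> (nat + nat \<times> nat) set" where
  "JJ n k = Inl ` {..<n} \<union> Inr ` ({..<n} \<times> {..<k})"

definition AA :: "real set \<Rightarrow> 'w pmf \<Rightarrow> nat + nat \<times> nat \<Rightarrow> (real + 'w) set" where
  "AA S PW j = (case j of Inl _ \<Rightarrow> Inl ` S | Inr _ \<Rightarrow> Inr ` set_pmf PW)"

definition st :: "(real \<Rightarrow> (real \<Rightarrow> real) \<Rightarrow> 'w \<Rightarrow> real) \<Rightarrow> nat \<Rightarrow> (nat + nat \<times> nat \<Rightarrow> real + 'w)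
    \<Rightarrow> nat \<Rightarrow> nat \<Rightarrow> real" where
  "st f n \<xi> k = states f n (\<lambda>i \<xi>. projl (\<xi> (Inl i))) (\<lambda>i t \<xi>. projr (\<xi> (Inr (i, t)))) \<xi> k"

lemma st_0: "st f n \<xi> 0 i = projl (\<xi> (Inl i))"
  by (simp add: st_def)

lemma st_Suc: "st f n \<xi> (Suc k) i = f (st f n \<xi> k i) (emp n (st f n \<xi> k)) (projr (\<xi> (Inr (i, k))))"
  by (simp add: st_def)

lemma states_transfer:
  assumes "\<And>i. s0 i x = s0' i y" "\<And>i t. w i t x = w' i t y"
  shows "states f n s0 w x k = states f n s0' w' y k"
  by (induction k) (use assms in auto)

lemma states_AE:
  assumes "\<And>i t. i < n \<Longrightarrow> w i t x = w' i t x"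
  shows "i < n \<Longrightarrow> states f n s0 w x k i = states f n s0 w' x k i"
proof (induction k arbitrary: i)
  case 0 then show ?case by simp
next
  case (Suc k)
  have "emp n (states f n s0 w x k) = emp n (states f n s0 w' x k)"
    by (rule emp_cong) (use Suc in auto)
  then show ?case using Suc assms by simp
qed

lemma JJ_mono: "k \<le> K \<Longrightarrow> JJ n k \<subseteq> JJ n K"
  unfolding JJ_def by auto

lemma st_local:
  assumes "\<And>j. j \<in> JJ n K \<Longrightarrow> \<xi> j = \<xi>' j"
  shows "k \<le> K \<Longrightarrow> i < n \<Longrightarrow> st f n \<xi> k i = st f n \<xi>' k i"
proof (induction k arbitrary: i)
  case 0 then show ?case using assms by (simp add: st_0 JJ_def)
next
  case (Suc k)
  have "emp n (st f n \<xi> k) = emp n (st f n \<xi>' k)"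
    by (rule emp_cong) (use Suc in auto)
  moreover have "\<xi> (Inr (i, k)) = \<xi>' (Inr (i, k))" using Suc assms by (simp add: JJ_def)
  ultimately show ?case using Suc by (simp add: st_Suc)
qed

lemma emp_st_local:
  assumes "\<And>j. j \<in> JJ n K \<Longrightarrow> \<xi> j = \<xi>' j" "k \<le> K"
  shows "emp n (st f n \<xi> k) = emp n (st f n \<xi>' k)"
  by (rule emp_cong) (use st_local[OF assms(1)] assms(2) in auto)

lemma st_in_S:
  assumes S: "finite S" and n: "n \<ge> 1"
    and f_in: "\<And>s m w. s \<in> S \<Longrightarrow> probvec S m \<Longrightarrow> w \<in> set_pmf PW \<Longrightarrow> f s m w \<in> S"
    and \<xi>: "\<And>j. j \<in> JJ n K \<Longrightarrow> \<xi> j \<in> AA S PW j"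
  shows "k \<le> K \<Longrightarrow> i < n \<Longrightarrow> st f n \<xi> k i \<in> S"
proof (induction k arbitrary: i)
  case 0
  then have "\<xi> (Inl i) \<in> Inl ` S" using \<xi>[of "Inl i"] by (auto simp: JJ_def AA_def)
  then show ?case by (auto simp: st_0)
next
  case (Suc k)
  have "\<xi> (Inr (i, k)) \<in> Inr ` set_pmf PW" using \<xi>[of "Inr (i, k)"] Suc by (auto simp: JJ_def AA_def)
  then have w: "projr (\<xi> (Inr (i, k))) \<in> set_pmf PW" by auto
  have "probvec S (emp n (st f n \<xi> k))" by (rule emp_probvec[OF S n]) (use Suc in auto)
  then show ?case using Suc f_in w by (simp add: st_Suc)
qed

lemma aux_div: "0 < (q::real) \<Longrightarrow> c * q / (q * q) = c / q"
  by (simp add: field_simps)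

theorem theorem6:
  fixes S :: "real set" and PW :: "'w pmf"
    and f :: "real \<Rightarrow> (real \<Rightarrow> real) \<Rightarrow> 'w \<Rightarrow> real"
    and c :: "(real \<Rightarrow> real) \<Rightarrow> (real \<Rightarrow> real) \<Rightarrow> nat \<Rightarrow> real"
    and \<gamma> K_T K_c K_p :: real
  assumes S_fin: "finite S" and S_ne: "S \<noteq> {}"
    and W_fin: "finite (set_pmf PW)"
    and f_in: "\<And>s m w. s \<in> S \<Longrightarrow> probvec S m \<Longrightarrow> w \<in> set_pmf PW \<Longrightarrow> f s m w \<in> S"
    and c_nonneg: "\<And>m mh a. probvec S m \<Longrightarrow> probvec S mh \<Longrightarrow> a \<in> {0, 1} \<Longrightarrow> 0 \<le> c m mh a"
    and gamma: "0 < \<gamma>" "\<gamma> < 1"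
    and K_T: "0 < K_T"
    and T_lip: "\<And>s' s m m'. s' \<in> S \<Longrightarrow> s \<in> S \<Longrightarrow> probvec S m \<Longrightarrow> probvec S m' \<Longrightarrow>
        \<bar>Tk PW f s' s m - Tk PW f s' s m'\<bar> \<le> K_T * supnorm S (\<lambda>x. m x - m' x)"
    and K_c: "0 < K_c"
    and c_lip: "\<And>m mh a. probvec S m \<Longrightarrow> probvec S mh \<Longrightarrow> a \<in> {0, 1} \<Longrightarrow>
        c m mh a \<le> K_c * supnorm S (\<lambda>x. m x - mh x)"
    and K_p: "0 < K_p"
    and Tbar_lip: "\<And>p ph. probvec S p \<Longrightarrow> probvec S ph \<Longrightarrow>
        supnorm S (\<lambda>x. Tbar S PW f p x - Tbar S PW f ph x) \<le> K_p * supnorm S (\<lambda>x. p x - ph x)"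
    and contr: "\<gamma> * K_p < 1"
  shows "\<exists>C>0. \<forall>(n::nat) (M::'a measure) s0 w. n \<ge> 1 \<longrightarrow> prob_space M \<longrightarrow>
     prob_space.indep_vars M (\<lambda>_. count_space UNIV) (prim_rv s0 w) (Inl ` {..<n} \<union> Inr ` ({..<n} \<times> UNIV)) \<longrightarrow>
     (\<forall>i<n. \<forall>x\<in>space M. s0 i x \<in> S) \<longrightarrow>
     (\<forall>i<n. \<forall>t. distr M (count_space UNIV) (w i t) = measure_pmf PW) \<longrightarrow>
     (\<integral>\<^sup>+ x. (\<Sum>k. ennreal (\<gamma> ^ k *
          c (emp n (states f n s0 w x k))
            (((Tbar S PW f) ^^ k) (emp n (states f n s0 w x 0))) 0)) \<partial>M)
       \<le> ennreal (\<gamma> * K_c / ((1 - \<gamma>) * (1 - \<gamma> * K_p)) * (C / sqrt (real n)))"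
proof -
  obtain w0 where w0: "w0 \<in> set_pmf PW" using set_pmf_not_empty[of PW] by blast
  have cardS: "0 < real (card S)" using S_fin S_ne by (simp add: card_gt_0_iff)
  show ?thesis
  proof (intro exI[of _ "real (card S)"] conjI allI impI cardS)
    fix n :: nat and M :: "'a measure" and s0 w
    assume n: "1 \<le> n" and PS: "prob_space M"
      and indep: "prob_space.indep_vars M (\<lambda>_. count_space UNIV) (prim_rv s0 w) (Inl ` {..<n} \<union> Inr ` ({..<n} \<times> UNIV))"
      and s0S: "\<forall>i<n. \<forall>x\<in>space M. s0 i x \<in> S"
      and wd: "\<forall>i<n. \<forall>t. distr M (count_space UNIV) (w i t) = measure_pmf PW"
    interpret prob_space M by (rule PS)
    define I where "I = Inl ` {..<n} \<union> Inr ` ({..<n} \<times> (UNIV::nat set))"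
    define w' where "w' i t x = (if w i t x \<in> set_pmf PW then w i t x else w0)" for i t x
    define X where "X = prim_rv s0 w'"
    define cl :: "real + 'w \<Rightarrow> real + 'w" where "cl = case_sum Inl (\<lambda>v. Inr (if v \<in> set_pmf PW then v else w0))"
    have Xcl: "(\<lambda>j x. cl (prim_rv s0 w j x)) = X"
      by (auto simp: fun_eq_iff X_def prim_rv_def cl_def w'_def split: sum.split)
    have indX: "indep_vars (\<lambda>_. count_space UNIV) X I"
      unfolding Xcl[symmetric] I_def by (rule indep_vars_compose2[OF indep]) simp
    have rvw: "w i t \<in> measurable M (count_space UNIV)" if "i < n" for i t
    proof -
      have "prim_rv s0 w (Inr (i,t)) \<in> measurable M (count_space UNIV)"
        using indep that unfolding indep_vars_def2 by auto
      then have "(\<lambda>x. projr (prim_rv s0 w (Inr (i,t)) x)) \<in> measurable M (count_space UNIV)"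
        by (rule measurable_compose) simp
      then show ?thesis by (simp add: prim_rv_def)
    qed
    have AEw: "AE x in M. \<forall>i t. i < n \<longrightarrow> w i t x \<in> set_pmf PW"
    proof -
      have "AE x in M. i < n \<longrightarrow> w i t x \<in> set_pmf PW" for i t
      proof (cases "i < n")
        case True
        have "AE y in distr M (count_space UNIV) (w i t). y \<in> set_pmf PW"
          unfolding wd[rule_format, OF True, of t] by (rule AE_measure_pmf)
        then have "AE x in M. w i t x \<in> set_pmf PW" by (rule AE_distrD[OF rvw[OF True]])
        then show ?thesis by auto
      qed simp
      then show ?thesis by (simp add: AE_all_countable)
    qed
    have AEeq: "AE x in M. \<forall>i t. i < n \<longrightarrow> w i t x = w' i t x"
      using AEw by eventually_elim (auto simp: w'_def)
    have w'_in: "w' i t x \<in> set_pmf PW" for i t x using w0 by (simp add: w'_def)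

    have JJfin: "finite (JJ n K)" for K by (simp add: JJ_def)
    have JJsub: "JJ n K \<subseteq> I" for K by (auto simp: JJ_def I_def)
    have JJne: "JJ n K \<noteq> {}" for K
    proof -
      have "Inl 0 \<in> JJ n K" using n by (simp add: JJ_def)
      then show ?thesis by blast
    qed
    have AAfin: "finite (AA S PW j)" for j using S_fin W_fin by (simp add: AA_def split: sum.split)
    have XA: "X j x \<in> AA S PW j" if "j \<in> JJ n K" "x \<in> space M" for j x K
      using that s0S w'_in by (auto simp: JJ_def AA_def X_def prim_rv_def)
    define pp where "pp j v = prob {x\<in>space M. X j x = v}" for j v
    have form: "integrable M (\<lambda>x. H (\<lambda>j. X j x)) \<and>
        (\<integral>x. H (\<lambda>j. X j x) \<partial>M) = (\<Sum>\<xi>\<in>PiE (JJ n K) (AA S PW). H \<xi> * pw (JJ n K) pp \<xi>)"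
      if loc: "\<And>\<xi> \<xi>'. (\<And>j. j \<in> JJ n K \<Longrightarrow> \<xi> j = \<xi>' j) \<Longrightarrow> H \<xi> = H \<xi>'" for H K
      using finite_formula[OF indX JJfin JJsub JJne, of K "AA S PW" H] AAfin XA loc
      unfolding pp_def by blast
    have ww0: "0 \<le> pw J pp \<xi>" for J \<xi> unfolding pw_def pp_def by (auto intro: prod_nonneg)
    have ww1: "(\<Sum>\<xi>\<in>PiE (JJ n K) (AA S PW). pw (JJ n K) pp \<xi>) = 1" for K
      using form[of K "\<lambda>_. 1"] by (simp add: prob_space)
    have PiE_AA: "\<xi> j \<in> AA S PW j" if "\<xi> \<in> PiE (JJ n K) (AA S PW)" "j \<in> JJ n K" for \<xi> j K
      using that by auto

    define mm where "mm \<xi> k = emp n (st f n \<xi> k)" for \<xi> k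
    define ee where "ee k \<xi> = supnorm S (\<lambda>s. mm \<xi> k s - (Tbar S PW f ^^ k) (mm \<xi> 0) s)" for k \<xi>
    define dd where "dd k \<xi> = supnorm S (\<lambda>s. mm \<xi> (Suc k) s - Tbar S PW f (mm \<xi> k) s)" for k \<xi>
    define gg where "gg k s' i \<xi> = (if s' = f (st f n \<xi> k i) (mm \<xi> k) (projr (\<xi> (Inr (i, k)))) then 1 else 0)
        - Tk PW f s' (st f n \<xi> k i) (mm \<xi> k)" for k s' i \<xi>
    define E where "E k = (\<integral>x. ee k (\<lambda>j. X j x) \<partial>M)" for k

    have mm_loc: "\<And>\<xi> \<xi>' k K. (\<And>j. j \<in> JJ n K \<Longrightarrow> \<xi> j = \<xi>' j) \<Longrightarrow> k \<le> K \<Longrightarrow> mm \<xi> k = mm \<xi>' k"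
      unfolding mm_def by (rule emp_st_local)
    have ee_loc: "ee k \<xi> = ee k \<xi>'" if "\<And>j. j \<in> JJ n K \<Longrightarrow> \<xi> j = \<xi>' j" "k \<le> K" for \<xi> \<xi>' k K
    proof -
      have "mm \<xi> k = mm \<xi>' k" "mm \<xi> 0 = mm \<xi>' 0"
        using mm_loc[of K \<xi> \<xi>' k] mm_loc[of K \<xi> \<xi>' 0] that by auto
      then show ?thesis unfolding ee_def by simp
    qed
    have dd_loc: "dd k \<xi> = dd k \<xi>'" if "\<And>j. j \<in> JJ n K \<Longrightarrow> \<xi> j = \<xi>' j" "Suc k \<le> K" for \<xi> \<xi>' k K
    proof -
      have "mm \<xi> k = mm \<xi>' k" "mm \<xi> (Suc k) = mm \<xi>' (Suc k)"
        using mm_loc[of K \<xi> \<xi>' k] mm_loc[of K \<xi> \<xi>' "Suc k"] that by auto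
      then show ?thesis unfolding dd_def by simp
    qed
    have gg_loc: "gg k s' i \<xi> = gg k s' i \<xi>'"
      if "\<And>j. j \<in> JJ n K \<Longrightarrow> \<xi> j = \<xi>' j" "Suc k \<le> K" "i < n" for \<xi> \<xi>' k K s' i
    proof -
      have "\<xi> (Inr (i, k)) = \<xi>' (Inr (i, k))" using that by (intro that(1)) (auto simp: JJ_def)
      moreover have "mm \<xi> k = mm \<xi>' k" using mm_loc[of K \<xi> \<xi>' k] that by auto
      moreover have "st f n \<xi> k i = st f n \<xi>' k i" using st_local[of n K \<xi> \<xi>' k i f] that by auto
      ultimately show ?thesis unfolding gg_def by simp
    qed

    have good_st: "st f n \<xi> k i \<in> S" if "\<And>j. j \<in> JJ n K \<Longrightarrow> \<xi> j \<in> AA S PW j" "k \<le> K" "i < n" for \<xi> k K i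
      by (rule st_in_S[OF S_fin n f_in that])
    have good_mm: "probvec S (mm \<xi> k)" if "\<And>j. j \<in> JJ n K \<Longrightarrow> \<xi> j \<in> AA S PW j" "k \<le> K" for \<xi> k K
      unfolding mm_def by (rule emp_probvec[OF S_fin n]) (rule good_st[OF that])
    have good_T: "probvec S ((Tbar S PW f ^^ k) (mm \<xi> 0))" if "\<And>j. j \<in> JJ n K \<Longrightarrow> \<xi> j \<in> AA S PW j" for \<xi> k K
    proof -
      have "probvec S (mm \<xi> 0)" using good_mm[of K \<xi> 0] that by blast
      then show ?thesis using Tbar_pow_probvec[of S PW f "mm \<xi> 0" k] S_fin W_fin f_in by blast
    qed
    have ee_bd: "0 \<le> ee k \<xi> \<and> ee k \<xi> \<le> 1" if "\<And>j. j \<in> JJ n K \<Longrightarrow> \<xi> j \<in> AA S PW j" "k \<le> K" for \<xi> k K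
      unfolding ee_def using supnorm_nonneg[OF S_fin S_ne]
        supnorm_probvec_le1[OF S_fin S_ne good_mm[OF that] good_T[OF that(1)]] by auto
    have ee_rec: "ee (Suc k) \<xi> \<le> dd k \<xi> + K_p * ee k \<xi>"
      if "\<And>j. j \<in> JJ n K \<Longrightarrow> \<xi> j \<in> AA S PW j" "Suc k \<le> K" for \<xi> k K
    proof -
      have pk: "probvec S (mm \<xi> k)" using good_mm[OF that(1)] that(2) by simp
      have pT: "probvec S ((Tbar S PW f ^^ k) (mm \<xi> 0))" by (rule good_T[OF that(1)])
      have "ee (Suc k) \<xi> \<le> dd k \<xi> +
          supnorm S (\<lambda>s. Tbar S PW f (mm \<xi> k) s - Tbar S PW f ((Tbar S PW f ^^ k) (mm \<xi> 0)) s)"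
        unfolding ee_def dd_def using supnorm_tri[OF S_fin S_ne] by simp
      also have "\<dots> \<le> dd k \<xi> + K_p * ee k \<xi>"
        unfolding ee_def using Tbar_lip[OF pk pT] by simp
      finally show ?thesis .
    qed
    have gg_bd: "\<bar>gg k s' i \<xi>\<bar> \<le> 1" for k s' i \<xi>
      unfolding gg_def using Tk_nonneg[of PW f s' "st f n \<xi> k i" "mm \<xi> k"] Tk_le1[OF W_fin, of f s' "st f n \<xi> k i" "mm \<xi> k"]
      by auto
    have dd_bd: "dd k \<xi> \<le> (\<Sum>s'\<in>S. \<bar>\<Sum>i<n. gg k s' i \<xi>\<bar>) / real n"
      if "\<And>j. j \<in> JJ n K \<Longrightarrow> \<xi> j \<in> AA S PW j" "Suc k \<le> K" for \<xi> k K
    proof -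
      have stS: "\<And>i. i < n \<Longrightarrow> st f n \<xi> k i \<in> S" using good_st[OF that(1)] that(2) by simp
      have eq: "mm \<xi> (Suc k) s' - Tbar S PW f (mm \<xi> k) s' = (\<Sum>i<n. gg k s' i \<xi>) / real n" for s'
      proof -
        have "mm \<xi> (Suc k) s' = (\<Sum>i<n. if s' = st f n \<xi> (Suc k) i then 1 else 0) / real n"
          by (simp only: mm_def emp_def card_eq_sum_if)
        moreover have "Tbar S PW f (mm \<xi> k) s' = (\<Sum>i<n. Tk PW f s' (st f n \<xi> k i) (mm \<xi> k)) / real n"
          unfolding mm_def by (rule Tbar_emp[OF S_fin stS])
        ultimately show ?thesis unfolding gg_def
          by (simp add: st_Suc mm_def sum_subtractf diff_divide_distrib)
      qed
      have "dd k \<xi> \<le> (\<Sum>s'\<in>S. \<bar>mm \<xi> (Suc k) s' - Tbar S PW f (mm \<xi> k) s'\<bar>)"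
        unfolding dd_def by (rule supnorm_le_sum[OF S_fin S_ne])
      also have "\<dots> = (\<Sum>s'\<in>S. \<bar>\<Sum>i<n. gg k s' i \<xi>\<bar> / real n)"
        by (simp add: eq)
      also have "\<dots> = (\<Sum>s'\<in>S. \<bar>\<Sum>i<n. gg k s' i \<xi>\<bar>) / real n"
        by (simp add: sum_divide_distrib)
      finally show ?thesis .
    qed
    have pp_Inr: "pp (Inr (i, k)) (Inr u) = pmf PW u" if "i < n" for i k u
    proof -
      have rvX: "X j \<in> measurable M (count_space UNIV)" if "j \<in> I" for j
        using indX that unfolding indep_vars_def2 by auto
      have e1: "{x\<in>space M. X (Inr (i, k)) x = Inr u} = X (Inr (i, k)) -` {Inr u} \<inter> space M" by auto
      have s1: "{x\<in>space M. X (Inr (i, k)) x = Inr u} \<in> events"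
        unfolding e1 by (rule measurable_sets[OF rvX]) (use that in \<open>auto simp: I_def\<close>)
      have e2: "{x\<in>space M. w i k x = u} = w i k -` {u} \<inter> space M" by auto
      have s2: "{x\<in>space M. w i k x = u} \<in> events"
        unfolding e2 by (rule measurable_sets[OF rvw[OF that]]) auto
      have "pp (Inr (i, k)) (Inr u) = prob {x\<in>space M. w i k x = u}"
        unfolding pp_def
      proof (rule measure_eq_AE[OF _ s1 s2])
        show "AE x in M. (x \<in> {x\<in>space M. X (Inr (i, k)) x = Inr u}) = (x \<in> {x\<in>space M. w i k x = u})"
          using AEeq by (rule eventually_mono) (use that in \<open>auto simp: X_def prim_rv_def\<close>)
      qed
      also have "\<dots> = measure (distr M (count_space UNIV) (w i k)) {u}"
        by (subst measure_distr[OF rvw[OF that]]) (auto simp: e2)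
      also have "\<dots> = pmf PW u"
        using wd that by (simp add: measure_pmf_single)
      finally show ?thesis .
    qed

    have cross: "(\<Sum>\<xi>\<in>PiE (JJ n (Suc k)) (AA S PW). (gg k s' i \<xi> * gg k s' l \<xi>) * pw (JJ n (Suc k)) pp \<xi>) = 0"
      if il: "i < n" "l < n" "i \<noteq> l" for k s' i l
    proof (rule sum_PiE_zero[OF JJfin])
      show "Inr (i, k) \<in> JJ n (Suc k)" using il by (auto simp: JJ_def)
      fix \<xi> :: "nat + nat \<times> nat \<Rightarrow> real + 'w"
      define a :: "nat + nat \<times> nat" where "a = Inr (i, k)"
      have agree: "\<And>j. j \<in> JJ n k \<Longrightarrow> (\<xi>(a := v)) j = \<xi> j" for v by (auto simp: a_def JJ_def)
      have mmeq: "mm (\<xi>(a := v)) k = mm \<xi> k" for v using mm_loc[of k "\<xi>(a := v)" \<xi> k] agree by blast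
      have steq: "st f n (\<xi>(a := v)) k i' = st f n \<xi> k i'" if "i' < n" for v i'
        using st_local[of n k "\<xi>(a := v)" \<xi> k i' f] agree that by blast
      have gl: "gg k s' l (\<xi>(a := v)) = gg k s' l \<xi>" for v
        unfolding gg_def using il mmeq steq by (simp add: a_def)
      define T where "T = Tk PW f s' (st f n \<xi> k i) (mm \<xi> k)"
      have gi: "gg k s' i (\<xi>(a := Inr u)) = (if s' = f (st f n \<xi> k i) (mm \<xi> k) u then 1 else 0) - T" for u
        unfolding gg_def T_def using il mmeq steq by (simp add: a_def)
      have AAa: "AA S PW a = Inr ` set_pmf PW" by (simp add: a_def AA_def)
      have ppa: "pp a (Inr u) = pmf PW u" for u using pp_Inr il by (simp add: a_def)
      have "(\<Sum>v\<in>AA S PW a. pp a v * (gg k s' i (\<xi>(a := v)) * gg k s' l (\<xi>(a := v)))) =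
          (\<Sum>u\<in>set_pmf PW. pp a (Inr u) * (gg k s' i (\<xi>(a := Inr u)) * gg k s' l (\<xi>(a := Inr u))))"
        unfolding AAa by (simp add: sum.reindex)
      also have "\<dots> = (\<Sum>u\<in>set_pmf PW. pmf PW u * ((if s' = f (st f n \<xi> k i) (mm \<xi> k) u then 1 else 0) - T)) * gg k s' l \<xi>"
        unfolding sum_distrib_right by (rule sum.cong) (auto simp: ppa gi gl)
      also have "(\<Sum>u\<in>set_pmf PW. pmf PW u * ((if s' = f (st f n \<xi> k i) (mm \<xi> k) u then 1 else 0) - T))
          = (\<Sum>u\<in>set_pmf PW. pmf PW u * (if s' = f (st f n \<xi> k i) (mm \<xi> k) u then 1 else 0)) - T * (\<Sum>u\<in>set_pmf PW. pmf PW u)"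
        by (simp add: right_diff_distrib sum_subtractf sum_distrib_left mult_ac)
      also have "(\<Sum>u\<in>set_pmf PW. pmf PW u * (if s' = f (st f n \<xi> k i) (mm \<xi> k) u then 1 else 0)) = T"
        unfolding T_def Tk_def by simp
      also have "(\<Sum>u\<in>set_pmf PW. pmf PW u) = 1" by (rule sum_pmf_eq_1) (use W_fin in auto)
      finally show "(\<Sum>v\<in>AA S PW (Inr (i, k)). pp (Inr (i, k)) v *
          (gg k s' i (\<xi>(Inr (i, k) := v)) * gg k s' l (\<xi>(Inr (i, k) := v)))) = 0"
        by (simp only: a_def mult_1_right diff_self mult_zero_left)
    qed
    have finX: "finite (PiE (JJ n K) (AA S PW))" for K
      using finite_PiE[OF JJfin, of K "AA S PW"] AAfin by auto
    have sqn: "real (card S) * sqrt (real n) / real n = real (card S) / sqrt (real n)"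
    proof -
      have s: "sqrt (real n) * sqrt (real n) = real n" by simp
      have pos: "0 < sqrt (real n)" using n by simp
      have "real (card S) * sqrt (real n) / real n = real (card S) * sqrt (real n) / (sqrt (real n) * sqrt (real n))"
        by (simp only: s)
      also have "\<dots> = real (card S) / sqrt (real n)"
        using pos by (rule aux_div)
      finally show ?thesis .
    qed
    have Ed: "(\<Sum>\<xi>\<in>PiE (JJ n (Suc k)) (AA S PW). dd k \<xi> * pw (JJ n (Suc k)) pp \<xi>) \<le> real (card S) / sqrt (real n)"
      for k
    proof -
      let ?X = "PiE (JJ n (Suc k)) (AA S PW)" and ?w = "pw (JJ n (Suc k)) pp"
      have G: "(\<Sum>\<xi>\<in>?X. \<bar>\<Sum>i<n. gg k s' i \<xi>\<bar> * ?w \<xi>) \<le> sqrt (real n)" for s'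
      proof -
        have "(\<Sum>\<xi>\<in>?X. \<bar>\<Sum>i<n. gg k s' i \<xi>\<bar> * ?w \<xi>) \<le> sqrt (\<Sum>\<xi>\<in>?X. (\<Sum>i<n. gg k s' i \<xi>)\<^sup>2 * ?w \<xi>)"
          by (rule cs_weighted[where X="?X" and w="?w"]) (simp_all only: ww0 ww1)
        also have "\<dots> \<le> sqrt (real n)"
        proof (rule real_sqrt_le_mono, rule second_moment[where X="?X" and w="?w" and g="gg k s'" and n=n])
          show "finite ?X" by (rule finX)
          show "\<And>\<xi>. \<xi> \<in> ?X \<Longrightarrow> 0 \<le> ?w \<xi>" by (rule ww0)
          show "(\<Sum>\<xi>\<in>?X. ?w \<xi>) = 1" by (rule ww1)
          show "\<And>i \<xi>. \<bar>gg k s' i \<xi>\<bar> \<le> 1" by (rule gg_bd)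
          show "\<And>i l. i < n \<Longrightarrow> l < n \<Longrightarrow> i \<noteq> l \<Longrightarrow> (\<Sum>\<xi>\<in>?X. (gg k s' i \<xi> * gg k s' l \<xi>) * ?w \<xi>) = 0"
            by (rule cross)
        qed
        finally show ?thesis .
      qed
      have "(\<Sum>\<xi>\<in>?X. dd k \<xi> * ?w \<xi>) \<le> (\<Sum>\<xi>\<in>?X. ((\<Sum>s'\<in>S. \<bar>\<Sum>i<n. gg k s' i \<xi>\<bar>) / real n) * ?w \<xi>)"
      proof (rule sum_mono, rule mult_right_mono)
        fix \<xi> assume "\<xi> \<in> ?X"
        show "dd k \<xi> \<le> (\<Sum>s'\<in>S. \<bar>\<Sum>i<n. gg k s' i \<xi>\<bar>) / real n"
          by (rule dd_bd[of "Suc k" \<xi> k]) (simp_all add: PiE_AA[OF \<open>\<xi> \<in> ?X\<close>])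
      qed (rule ww0)
      also have "\<dots> = (\<Sum>\<xi>\<in>?X. \<Sum>s'\<in>S. \<bar>\<Sum>i<n. gg k s' i \<xi>\<bar> * ?w \<xi> / real n)"
        by (rule sum.cong) (simp_all add: sum_distrib_right sum_divide_distrib)
      also have "\<dots> = (\<Sum>s'\<in>S. \<Sum>\<xi>\<in>?X. \<bar>\<Sum>i<n. gg k s' i \<xi>\<bar> * ?w \<xi>) / real n"
        by (subst sum.swap) (simp add: sum_divide_distrib)
      also have "\<dots> \<le> (\<Sum>s'\<in>S. sqrt (real n)) / real n"
        by (intro divide_right_mono sum_mono G) simp
      also have "\<dots> = real (card S) / sqrt (real n)" using sqn by simp
      finally show ?thesis .
    qed
    have Erep: "E k = (\<Sum>\<xi>\<in>PiE (JJ n (Suc k)) (AA S PW). ee k \<xi> * pw (JJ n (Suc k)) pp \<xi>)"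
      and intE: "integrable M (\<lambda>x. ee k (\<lambda>j. X j x))" for k
    proof -
      have "(\<And>\<xi> \<xi>'. (\<And>j. j \<in> JJ n (Suc k) \<Longrightarrow> \<xi> j = \<xi>' j) \<Longrightarrow> ee k \<xi> = ee k \<xi>')"
      proof -
        fix \<xi> \<xi>' :: "nat + nat \<times> nat \<Rightarrow> real + 'w"
        assume h: "\<And>j. j \<in> JJ n (Suc k) \<Longrightarrow> \<xi> j = \<xi>' j"
        show "ee k \<xi> = ee k \<xi>'" by (rule ee_loc[of "Suc k" \<xi> \<xi>' k, OF h]) simp_all
      qed
      from form[of "Suc k" "ee k", OF this]
      show "E k = (\<Sum>\<xi>\<in>PiE (JJ n (Suc k)) (AA S PW). ee k \<xi> * pw (JJ n (Suc k)) pp \<xi>)"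
        and "integrable M (\<lambda>x. ee k (\<lambda>j. X j x))" unfolding E_def by auto
    qed
    have Erep': "E (Suc k) = (\<Sum>\<xi>\<in>PiE (JJ n (Suc k)) (AA S PW). ee (Suc k) \<xi> * pw (JJ n (Suc k)) pp \<xi>)" for k
    proof -
      have "(\<And>\<xi> \<xi>'. (\<And>j. j \<in> JJ n (Suc k) \<Longrightarrow> \<xi> j = \<xi>' j) \<Longrightarrow> ee (Suc k) \<xi> = ee (Suc k) \<xi>')"
      proof -
        fix \<xi> \<xi>' :: "nat + nat \<times> nat \<Rightarrow> real + 'w"
        assume h: "\<And>j. j \<in> JJ n (Suc k) \<Longrightarrow> \<xi> j = \<xi>' j"
        show "ee (Suc k) \<xi> = ee (Suc k) \<xi>'" by (rule ee_loc[of "Suc k" \<xi> \<xi>' "Suc k", OF h]) simp_all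
      qed
      from form[of "Suc k" "ee (Suc k)", OF this] show ?thesis unfolding E_def by auto
    qed
    have Erec: "E (Suc k) \<le> real (card S) / sqrt (real n) + K_p * E k" for k
    proof -
      let ?X = "PiE (JJ n (Suc k)) (AA S PW)" and ?w = "pw (JJ n (Suc k)) pp"
      have "E (Suc k) \<le> (\<Sum>\<xi>\<in>?X. (dd k \<xi> + K_p * ee k \<xi>) * ?w \<xi>)"
        unfolding Erep'
      proof (rule sum_mono, rule mult_right_mono)
        fix \<xi> assume "\<xi> \<in> ?X"
        show "ee (Suc k) \<xi> \<le> dd k \<xi> + K_p * ee k \<xi>"
          by (rule ee_rec[of "Suc k" \<xi> k]) (simp_all add: PiE_AA[OF \<open>\<xi> \<in> ?X\<close>])
      qed (rule ww0)
      also have "\<dots> = (\<Sum>\<xi>\<in>?X. dd k \<xi> * ?w \<xi>) + K_p * E k"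
      proof -
        have "(\<Sum>\<xi>\<in>?X. (dd k \<xi> + K_p * ee k \<xi>) * ?w \<xi>) = (\<Sum>\<xi>\<in>?X. dd k \<xi> * ?w \<xi> + K_p * (ee k \<xi> * ?w \<xi>))"
          by (rule sum.cong) (simp_all add: algebra_simps)
        then show ?thesis unfolding Erep by (simp add: sum.distrib sum_distrib_left)
      qed
      also have "\<dots> \<le> real (card S) / sqrt (real n) + K_p * E k" using Ed[of k] by simp
      finally show ?thesis .
    qed
    have E0: "E 0 = 0"
    proof -
      have "ee 0 \<xi> = 0" for \<xi> unfolding ee_def using supnorm_zero[OF S_fin S_ne, of "mm \<xi> 0"] by simp
      then show ?thesis unfolding E_def by simp
    qed
    have Ebd: "0 \<le> E k \<and> E k \<le> 1" for k
    proof -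
      let ?X = "PiE (JJ n (Suc k)) (AA S PW)" and ?w = "pw (JJ n (Suc k)) pp"
      have b: "0 \<le> ee k \<xi> \<and> ee k \<xi> \<le> 1" if "\<xi> \<in> ?X" for \<xi>
      proof (rule ee_bd[of "Suc k" \<xi> k])
        show "\<And>j. j \<in> JJ n (Suc k) \<Longrightarrow> \<xi> j \<in> AA S PW j" using that by (rule PiE_AA)
      qed simp
      have "0 \<le> (\<Sum>\<xi>\<in>?X. ee k \<xi> * ?w \<xi>)"
      proof (rule sum_nonneg)
        fix \<xi> assume "\<xi> \<in> ?X" then show "0 \<le> ee k \<xi> * ?w \<xi>" using b[of \<xi>] ww0[of "JJ n (Suc k)" \<xi>] by simp
      qed
      moreover have "(\<Sum>\<xi>\<in>?X. ee k \<xi> * ?w \<xi>) \<le> (\<Sum>\<xi>\<in>?X. ?w \<xi>)"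
      proof (rule sum_mono)
        fix \<xi> assume "\<xi> \<in> ?X" then show "ee k \<xi> * ?w \<xi> \<le> ?w \<xi>"
          using b[of \<xi>] ww0[of "JJ n (Suc k)" \<xi>] by (simp add: mult_left_le_one_le)
      qed
      ultimately show ?thesis unfolding Erep using ww1 by simp
    qed
    have B0: "0 \<le> real (card S) / sqrt (real n)" by simp
    have Eb0: "\<And>k. 0 \<le> E k" and Eb1: "\<And>k. E k \<le> 1" using Ebd by auto
    note SB = series_bound[of \<gamma> K_p "real (card S) / sqrt (real n)" E, OF gamma K_p contr B0 E0 Eb0 Eb1 Erec]
    have sumE: "summable (\<lambda>k. \<gamma> ^ k * E k)" by (rule SB(1))
    have st_eq: "states f n s0 w' x k = st f n (\<lambda>j. X j x) k" for x k
      unfolding st_def by (rule states_transfer) (simp_all add: X_def prim_rv_def)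
    have step1: "(\<integral>\<^sup>+ x. (\<Sum>k. ennreal (\<gamma> ^ k * c (emp n (states f n s0 w x k))
            (((Tbar S PW f) ^^ k) (emp n (states f n s0 w x 0))) 0)) \<partial>M) =
        (\<integral>\<^sup>+ x. (\<Sum>k. ennreal (\<gamma> ^ k * c (mm (\<lambda>j. X j x) k)
            (((Tbar S PW f) ^^ k) (mm (\<lambda>j. X j x) 0)) 0)) \<partial>M)"
    proof (rule nn_integral_cong_AE)
      show "AE x in M. (\<Sum>k. ennreal (\<gamma> ^ k * c (emp n (states f n s0 w x k))
            (((Tbar S PW f) ^^ k) (emp n (states f n s0 w x 0))) 0)) =
        (\<Sum>k. ennreal (\<gamma> ^ k * c (mm (\<lambda>j. X j x) k)
            (((Tbar S PW f) ^^ k) (mm (\<lambda>j. X j x) 0)) 0))"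
        using AEeq
      proof (rule eventually_mono)
        fix x assume h: "\<forall>i t. i < n \<longrightarrow> w i t x = w' i t x"
        have e: "emp n (states f n s0 w x k) = mm (\<lambda>j. X j x) k" for k
        proof -
          have "emp n (states f n s0 w x k) = emp n (states f n s0 w' x k)"
          proof (rule emp_cong)
            fix i assume i: "i < n"
            show "states f n s0 w x k i = states f n s0 w' x k i"
              by (rule states_AE[where w=w and w'=w']) (use h i in auto)
          qed
          then show ?thesis unfolding mm_def st_eq .
        qed
        show "(\<Sum>k. ennreal (\<gamma> ^ k * c (emp n (states f n s0 w x k))
            (((Tbar S PW f) ^^ k) (emp n (states f n s0 w x 0))) 0)) =
          (\<Sum>k. ennreal (\<gamma> ^ k * c (mm (\<lambda>j. X j x) k)
            (((Tbar S PW f) ^^ k) (mm (\<lambda>j. X j x) 0)) 0))"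
          by (simp only: e)
      qed
    qed
    have ptw: "ennreal (\<gamma> ^ k * c (mm (\<lambda>j. X j x) k) (((Tbar S PW f) ^^ k) (mm (\<lambda>j. X j x) 0)) 0)
        \<le> ennreal (K_c * (\<gamma> ^ k * ee k (\<lambda>j. X j x)))" if x: "x \<in> space M" for x k
    proof (rule ennreal_leI)
      have gx: "\<And>j. j \<in> JJ n k \<Longrightarrow> (\<lambda>j. X j x) j \<in> AA S PW j" using XA x by blast
      have p1: "probvec S (mm (\<lambda>j. X j x) k)" by (rule good_mm[of k "\<lambda>j. X j x" k]) (use gx in simp_all)
      have p2: "probvec S (((Tbar S PW f) ^^ k) (mm (\<lambda>j. X j x) 0))" by (rule good_T[of k "\<lambda>j. X j x" k]) (use gx in simp_all)
      have "c (mm (\<lambda>j. X j x) k) (((Tbar S PW f) ^^ k) (mm (\<lambda>j. X j x) 0)) 0 \<le> K_c * ee k (\<lambda>j. X j x)"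
        unfolding ee_def by (rule c_lip[OF p1 p2]) simp
      then show "\<gamma> ^ k * c (mm (\<lambda>j. X j x) k) (((Tbar S PW f) ^^ k) (mm (\<lambda>j. X j x) 0)) 0
          \<le> K_c * (\<gamma> ^ k * ee k (\<lambda>j. X j x))"
        using gamma by (simp add: mult.left_commute mult_left_mono)
    qed
    have int2: "integrable M (\<lambda>x. K_c * (\<gamma> ^ k * ee k (\<lambda>j. X j x)))" for k
      using intE[of k] by simp
    have nn2: "0 \<le> K_c * (\<gamma> ^ k * ee k (\<lambda>j. X j x))" if "x \<in> space M" for x k
    proof -
      have "0 \<le> ee k (\<lambda>j. X j x)" using ee_bd[of k "\<lambda>j. X j x" k] XA that by auto
      then show ?thesis using K_c gamma by simp
    qed
    have "(\<integral>\<^sup>+ x. (\<Sum>k. ennreal (\<gamma> ^ k * c (mm (\<lambda>j. X j x) k)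
            (((Tbar S PW f) ^^ k) (mm (\<lambda>j. X j x) 0)) 0)) \<partial>M) \<le>
        (\<integral>\<^sup>+ x. (\<Sum>k. ennreal (K_c * (\<gamma> ^ k * ee k (\<lambda>j. X j x)))) \<partial>M)"
      by (rule nn_integral_mono, rule suminf_le[OF ptw summableI summableI])
    also have "\<dots> = (\<Sum>k. \<integral>\<^sup>+ x. ennreal (K_c * (\<gamma> ^ k * ee k (\<lambda>j. X j x))) \<partial>M)"
      by (rule nn_integral_suminf)
        (rule measurable_compose[OF borel_measurable_integrable[OF int2] measurable_ennreal])
    also have "\<dots> = (\<Sum>k. ennreal (K_c * (\<gamma> ^ k * E k)))"
    proof (rule arg_cong[where f=suminf], rule ext)
      fix k
      have "(\<integral>\<^sup>+ x. ennreal (K_c * (\<gamma> ^ k * ee k (\<lambda>j. X j x))) \<partial>M)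
          = ennreal (\<integral>x. K_c * (\<gamma> ^ k * ee k (\<lambda>j. X j x)) \<partial>M)"
        by (rule nn_integral_eq_integral[OF int2]) (use nn2 in auto)
      also have "(\<integral>x. K_c * (\<gamma> ^ k * ee k (\<lambda>j. X j x)) \<partial>M) = K_c * (\<gamma> ^ k * E k)"
        unfolding E_def by simp
      finally show "(\<integral>\<^sup>+ x. ennreal (K_c * (\<gamma> ^ k * ee k (\<lambda>j. X j x))) \<partial>M) = ennreal (K_c * (\<gamma> ^ k * E k))" .
    qed
    also have "\<dots> = ennreal (\<Sum>k. K_c * (\<gamma> ^ k * E k))"
      by (rule suminf_ennreal2) (use K_c gamma Eb0 summable_mult[OF sumE, of K_c] in auto)
    also have "(\<Sum>k. K_c * (\<gamma> ^ k * E k)) = K_c * (\<Sum>k. \<gamma> ^ k * E k)"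
      by (rule suminf_mult[OF sumE])
    also have "ennreal (K_c * (\<Sum>k. \<gamma> ^ k * E k)) \<le>
        ennreal (K_c * (\<gamma> * (real (card S) / sqrt (real n)) / ((1 - \<gamma>) * (1 - \<gamma> * K_p))))"
      using SB(2) K_c by (intro ennreal_leI mult_left_mono) auto
    also have "K_c * (\<gamma> * (real (card S) / sqrt (real n)) / ((1 - \<gamma>) * (1 - \<gamma> * K_p))) =
        \<gamma> * K_c / ((1 - \<gamma>) * (1 - \<gamma> * K_p)) * (real (card S) / sqrt (real n))"
      by (simp add: field_simps)
    finally show "(\<integral>\<^sup>+ x. (\<Sum>k. ennreal (\<gamma> ^ k *
          c (emp n (states f n s0 w x k))
            (((Tbar S PW f) ^^ k) (emp n (states f n s0 w x 0))) 0)) \<partial>M)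
       \<le> ennreal (\<gamma> * K_c / ((1 - \<gamma>) * (1 - \<gamma> * K_p)) * (real (card S) / sqrt (real n)))"
      unfolding step1 .
  qed
qed

end
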